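(* Let $n_1,n_2$ be coprime positive integers with $n_2<n_1$ and $n_1>1$. Let $r_0$ be a nonnegative rational number. Let $[a_0,a_1,\dots,a_L]$ be the continued fraction expansion of $n_2/n_1$ and $[b_0,b_1,\dots,b_M]$ the continued fraction expansion of $r_0$ (standard algorithm described in the context). If $$\left|r_0-\frac{n_2}{n_1}\right|<\frac{1}{4n_1(n_1-1)},$$ then one of the following holds: (1) $a_i=b_i$ for $i=0,1,\dots,L$; (2) $a_i=b_i$ for $i=0,1,\dots,L-1$, $a_L-1=b_L$, and $b_{L+1}=1$.
   Context: Continued fraction expansion of a nonnegative rational number $y$ (standard algorithm): set $c_0=\lfloor y\rfloor$ and $s_0=y-c_0$; for $i\ge1$, as long as $s_{i-1}\neq0$, set $c_i=\lfloor 1/s_{i-1}\rfloor$ and $s_i=1/s_{i-1}-c_i$. The process stops at the first index $M$ with $s_M=0$, and the expansion is $[c_0,c_1,\dots,c_M]$, meaning $y=c_0+\cfrac{1}{c_1+\cfrac{1}{\ddots+\cfrac{1}{c_M}}}$. *)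

theory Defs
  imports Complex_Main
begin

fun cf_rem :: "rat \<Rightarrow> nat \<Rightarrow> rat" where
  "cf_rem y 0 = y - of_int \<lfloor>y\<rfloor>"
| "cf_rem y (Suc i) = 1 / cf_rem y i - of_int \<lfloor>1 / cf_rem y i\<rfloor>"

fun cf_coeff :: "rat \<Rightarrow> nat \<Rightarrow> int" where
  "cf_coeff y 0 = \<lfloor>y\<rfloor>"
| "cf_coeff y (Suc i) = \<lfloor>1 / cf_rem y i\<rfloor>"

definition cf_len :: "rat \<Rightarrow> nat" where
  "cf_len y = (LEAST M. cf_rem y M = 0)"

definition cf_expansion :: "rat \<Rightarrow> int list" where
  "cf_expansion y = map (cf_coeff y) [0..<Suc (cf_len y)]"

end

theory Submission
  imports Defs
begin

lemma frac_le_helper: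
  fixes a b c d :: rat
  assumes "0 < b" "0 < d" "a*d \<le> c*b"
  shows "a/b \<le> c/d"
proof -
  have "(a*d)/(b*d) \<le> (c*b)/(b*d)" using assms by (intro divide_right_mono) auto
  then show ?thesis using assms by simp
qed

lemma frac_less_helper:
  fixes a b c d :: rat
  assumes "0 < b" "0 < d" "a*d < c*b"
  shows "a/b < c/d"
proof -
  have "(a*d)/(b*d) < (c*b)/(b*d)" using assms by (intro divide_strict_right_mono) auto
  then show ?thesis using assms by simp
qed

lemma ineq_core:
  fixes D Q :: rat
  assumes "1 \<le> D" "D + 1 \<le> Q"
  shows "(1/(Q*(2*Q-1))) / ((D/Q - 1/(Q*(2*Q-1))) * (D/Q)) \<le> 1/(D*(2*D-1))"
proof -
  have Q: "Q > 0" "2*Q-1 > 0" using assms by auto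
  have p0: "D*(2*Q-1) - 1 > 0"
  proof -
    have "2*Q-1 \<le> D*(2*Q-1)" using mult_right_mono[of 1 D "2*Q-1"] assms Q by simp
    then show ?thesis using assms by linarith
  qed
  have e1: "D/Q - 1/(Q*(2*Q-1)) = (D*(2*Q-1) - 1)/(Q*(2*Q-1))"
    using Q by (simp add: field_simps)
  have e2: "(D*(2*Q-1) - 1)/(Q*(2*Q-1)) * (D/Q) = (D*(D*(2*Q-1) - 1))/(Q*Q*(2*Q-1))"
    using Q by (simp add: field_simps)
  have e3: "(1/(Q*(2*Q-1))) / ((D*(D*(2*Q-1) - 1))/(Q*Q*(2*Q-1))) = Q / (D*(D*(2*Q-1) - 1))"
  proof -
    have gen: "(1/(Q*X)) / (Y/(Q*Q*X)) = Q / Y" if "X \<noteq> 0" "Y \<noteq> 0" for X Y :: rat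
      using that Q by (simp add: field_simps)
    show ?thesis by (rule gen) (use Q p0 assms in auto)
  qed
  have p: "D*(D*(2*Q-1) - 1) > 0" using assms p0 by simp
  have "Q * (D*(2*D-1)) \<le> 1 * (D*(D*(2*Q-1) - 1))"
  proof -
    have "Q*(2*D-1) \<le> D*(2*Q-1) - 1" using assms by (simp add: algebra_simps)
    then have "D*(Q*(2*D-1)) \<le> D*(D*(2*Q-1) - 1)" using assms by (intro mult_left_mono) auto
    then show ?thesis by (simp add: algebra_simps)
  qed
  moreover have "D*(2*D-1) > 0" using assms by simp
  ultimately have "Q / (D*(D*(2*Q-1) - 1)) \<le> 1/(D*(2*D-1))"
  proof -
    have g: "Q / Y \<le> 1 / Z" if "Q*Z \<le> 1*Y" "Y > 0" "Z > 0" for Y Z :: rat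
    proof -
      have "(Q*Z)/(Y*Z) \<le> (1*Y)/(Y*Z)" using that by (intro divide_right_mono) auto
      then show ?thesis using that by simp
    qed
    show ?thesis by (rule g) fact+
  qed
  then show ?thesis by (simp only: e1 e2 e3)
qed


lemma ineq1:
  fixes D Q u :: rat
  assumes "1 \<le> D" "D + 1 \<le> Q" "\<bar>u - D/Q\<bar> < 1/(Q*(2*Q-1))"
  shows "\<bar>1/u - Q/D\<bar> < 1/(D*(2*D-1))"
proof -
  define R where "R = 1/(Q*(2*Q-1))"
  define t where "t = D/Q"
  have Q: "Q > 0" "2*Q-1 > 1" using assms by auto
  have "R < 1/Q" unfolding R_def
    by (rule frac_less_helper) (use Q in \<open>auto simp: algebra_simps\<close>)
  moreover have "1/Q \<le> t" unfolding t_def using assms Q by (intro divide_right_mono) auto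
  ultimately have tR: "0 < t - R" by simp
  have R0: "R > 0" unfolding R_def using Q by simp
  have u: "t - R < u" "\<bar>u - t\<bar> < R" using assms unfolding R_def t_def by auto
  have t0: "t > 0" using tR R0 by simp
  have u0: "u > 0" using u tR by simp
  have "1/u - Q/D = (t - u)/(u*t)" unfolding t_def using Q assms u0 by (simp add: field_simps)
  then have "\<bar>1/u - Q/D\<bar> = \<bar>u - t\<bar>/(u*t)" using u0 t0 by (simp add: abs_minus_commute)
  also have "\<dots> \<le> \<bar>u - t\<bar>/((t-R)*t)"
    by (rule divide_left_mono) (use u tR t0 u0 in \<open>auto intro: mult_right_mono\<close>)
  also have "\<dots> < R/((t-R)*t)"
    by (rule divide_strict_right_mono) (use u tR t0 in auto)
  also have "\<dots> \<le> 1/(D*(2*D-1))" unfolding R_def t_def by (rule ineq_core) (use assms in auto)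
  finally show ?thesis .
qed

lemma ineq2:
  fixes A Q u :: rat
  assumes "2 \<le> A" "A \<le> Q" "\<bar>u - 1/A\<bar> < 1/(Q*(2*Q-1))"
  shows "A - 1/2 < 1/u \<and> 1/u < A + 1"
proof -
  have m: "A*(2*A-1) \<le> Q*(2*Q-1)" using assms by (intro mult_mono) auto
  have "1/(Q*(2*Q-1)) \<le> 1/(A*(2*A-1))"
    by (rule frac_le_helper) (use assms m in auto)
  then have u: "\<bar>u - 1/A\<bar> < 1/(A*(2*A-1))" using assms by linarith
  have e1: "1/A + 1/(A*(2*A-1)) = 2/(2*A-1)" using assms by (simp add: field_simps)
  have e2: "1/A - 1/(A*(2*A-1)) = (2*A-2)/(A*(2*A-1))" using assms by (simp add: field_simps)
  have up: "u < 2/(2*A-1)" using u e1 by linarith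
  have "1/(A+1) \<le> (2*A-2)/(A*(2*A-1))"
    by (rule frac_le_helper) (use assms in \<open>auto simp: algebra_simps\<close>)
  then have lo: "1/(A+1) < u" using u e2 by linarith
  have "0 < 1/(A+1)" using assms by simp
  then have u0: "0 < u" using lo by linarith
  have "1/(2/(2*A-1)) < 1/u" using up u0 assms by (intro divide_strict_left_mono) auto
  moreover have "1/u < 1/(1/(A+1))" using lo u0 assms by (intro divide_strict_left_mono) auto
  ultimately show ?thesis by simp
qed


lemma cf_shift:
  "cf_rem y (Suc i) = cf_rem (1 / cf_rem y 0) i \<and> cf_coeff y (Suc i) = cf_coeff (1 / cf_rem y 0) i"
  by (induction i) auto

lemma cf_shift_rem: "cf_rem y (Suc i) = cf_rem (1 / cf_rem y 0) i"
  using cf_shift by blast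

lemma cf_shift_coeff: "cf_coeff y (Suc i) = cf_coeff (1 / cf_rem y 0) i"
  using cf_shift by blast

lemma cf_term_aux: "0 < b \<Longrightarrow> y = of_int a / of_int b \<Longrightarrow> \<exists>M. cf_rem y M = 0"
proof (induction "nat b" arbitrary: a b y rule: less_induct)
  case less
  show ?case
  proof (cases "a mod b = 0")
    case True
    then obtain k where k: "a = b * k" by (auto simp: mod_eq_0_iff_dvd elim: dvdE)
    then have "y = of_int k" using less.prems by simp
    then have "cf_rem y 0 = 0" by simp
    then show ?thesis by blast
  next
    case False
    have m: "0 < a mod b" "a mod b < b" using False less.prems
      by (auto simp: pos_mod_bound order.not_eq_order_implies_strict pos_mod_sign)
    have fl: "\<lfloor>y\<rfloor> = a div b" using less.prems by (simp add: floor_divide_of_int_eq)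
    have ea: "(of_int a :: rat) = of_int b * of_int (a div b) + of_int (a mod b)"
      by (metis of_int_add of_int_mult div_mult_mod_eq mult.commute)
    have "cf_rem y 0 = of_int (a mod b) / of_int b"
      using less.prems fl ea by (simp add: field_simps)
    then have e: "1 / cf_rem y 0 = of_int b / of_int (a mod b)" by simp
    have "nat (a mod b) < nat b" using m by simp
    from less.hyps[OF this m(1) e] obtain M where "cf_rem (1 / cf_rem y 0) M = 0" by blast
    then have "cf_rem y (Suc M) = 0" by (simp only: cf_shift_rem)
    then show ?thesis by blast
  qed
qed

lemma cf_term: "\<exists>M. cf_rem y M = 0"
proof -
  obtain n d where nd: "quotient_of y = (n, d)" by (cases "quotient_of y") auto
  then have "y = of_int n / of_int d" "0 < d"
    by (auto simp: quotient_of_div quotient_of_denom_pos)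
  then show ?thesis using cf_term_aux by blast
qed

lemma cf_len0: "cf_len y = 0 \<longleftrightarrow> cf_rem y 0 = 0"
proof
  assume "cf_len y = 0"
  then show "cf_rem y 0 = 0" using LeastI_ex[OF cf_term[of y]] unfolding cf_len_def by simp
next
  assume "cf_rem y 0 = 0"
  then show "cf_len y = 0" unfolding cf_len_def by (simp add: Least_eq_0)
qed

lemma cf_len_Suc: "cf_rem y 0 \<noteq> 0 \<Longrightarrow> cf_len y = Suc (cf_len (1 / cf_rem y 0))"
proof -
  assume h: "cf_rem y 0 \<noteq> 0"
  obtain M where M: "cf_rem y M = 0" using cf_term by blast
  have "(LEAST M. cf_rem y M = 0) = Suc (LEAST m. cf_rem y (Suc m) = 0)"
    by (rule Least_Suc[of _ M]) (use M h in auto)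
  then show ?thesis unfolding cf_len_def cf_shift_rem .
qed

definition cf_close :: "rat \<Rightarrow> rat \<Rightarrow> bool" where
  "cf_close x r \<longleftrightarrow>
     (cf_len x \<le> cf_len r \<and> (\<forall>i\<le>cf_len x. cf_coeff x i = cf_coeff r i))
   \<or> (Suc (cf_len x) \<le> cf_len r \<and> (\<forall>i<cf_len x. cf_coeff x i = cf_coeff r i)
       \<and> cf_coeff x (cf_len x) - 1 = cf_coeff r (cf_len x) \<and> cf_coeff r (Suc (cf_len x)) = 1)"

lemma all_le_Suc: "(\<forall>i\<le>Suc n. P i) \<longleftrightarrow> P 0 \<and> (\<forall>i\<le>n. P (Suc i))"
proof
  assume h: "P 0 \<and> (\<forall>i\<le>n. P (Suc i))"
  show "\<forall>i\<le>Suc n. P i"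
  proof (intro allI impI)
    fix i assume "i \<le> Suc n" then show "P i" using h by (cases i) auto
  qed
qed auto

lemma all_less_Suc: "(\<forall>i<Suc n. P i) \<longleftrightarrow> P 0 \<and> (\<forall>i<n. P (Suc i))"
proof
  assume h: "P 0 \<and> (\<forall>i<n. P (Suc i))"
  show "\<forall>i<Suc n. P i"
  proof (intro allI impI)
    fix i assume "i < Suc n" then show "P i" using h by (cases i) auto
  qed
qed auto

lemma cf_close_shift:
  assumes "cf_rem x 0 \<noteq> 0" "cf_rem r 0 \<noteq> 0" "\<lfloor>x\<rfloor> = \<lfloor>r\<rfloor>"
    and "cf_close (1 / cf_rem x 0) (1 / cf_rem r 0)"
  shows "cf_close x r"
proof -
  have lx: "cf_len x = Suc (cf_len (1 / cf_rem x 0))" using assms(1) by (rule cf_len_Suc)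
  have lr: "cf_len r = Suc (cf_len (1 / cf_rem r 0))" using assms(2) by (rule cf_len_Suc)
  have c0: "cf_coeff x 0 = cf_coeff r 0" using assms(3) by simp
  have cs: "\<And>i. cf_coeff x (Suc i) = cf_coeff (1 / cf_rem x 0) i"
    "\<And>i. cf_coeff r (Suc i) = cf_coeff (1 / cf_rem r 0) i" by (rule cf_shift_coeff)+
  show ?thesis using assms(4) unfolding cf_close_def lx lr
    by (simp only: all_le_Suc all_less_Suc cs c0 Suc_le_mono) simp
qed

lemma cf_base:
  assumes "2 \<le> a" "of_int a - 1/2 < r" "r < of_int a + 1"
  shows "cf_close (of_int a) r"
proof -
  have l0: "cf_len (of_int a) = 0" by (simp add: cf_len0)
  show ?thesis
  proof (cases "of_int a \<le> r")
    case True
    then have "\<lfloor>r\<rfloor> = a" using assms by (simp add: floor_eq_iff)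
    then show ?thesis unfolding cf_close_def l0 by simp
  next
    case False
    then have fl: "\<lfloor>r\<rfloor> = a - 1" using assms by (simp add: floor_eq_iff)
    define s where "s = r - of_int (a - 1)"
    have s: "1/2 < s" "s < 1" using assms False unfolding s_def by auto
    have rs: "cf_rem r 0 = s" unfolding s_def using fl by simp
    then have "cf_rem r 0 \<noteq> 0" using s by auto
    then have lr: "1 \<le> cf_len r" using cf_len0[of r] by simp
    have "1 < 1/s" using s by simp
    moreover have "1/s < 2" using s by (simp add: divide_less_eq)
    ultimately have "\<lfloor>1/s\<rfloor> = 1" by (simp add: floor_eq_iff)
    then have "cf_coeff r 1 = 1" using rs by simp
    then show ?thesis unfolding cf_close_def l0 using lr fl by simp
  qed
qed


lemma cf_step:
  fixes p q :: int and x r :: rat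
  assumes "cf_rem x 0 \<noteq> 0" "0 < q" "x = of_int p / of_int q"
    and "\<bar>r - x\<bar> < 1/(of_int q * (2*of_int q - 1))"
  obtains d where "0 < d" "d < q" "1 / cf_rem x 0 = of_int q / of_int d"
    "cf_rem r 0 \<noteq> 0" "\<lfloor>r\<rfloor> = \<lfloor>x\<rfloor>"
    "\<bar>cf_rem r 0 - of_int d / of_int q\<bar> < 1/(of_int q * (2*of_int q - 1))"
proof -
  define a0 where "a0 = \<lfloor>x\<rfloor>"
  define t where "t = cf_rem x 0"
  define d where "d = p - a0 * q"
  define Q where "Q = (of_int q :: rat)"
  define D where "D = (of_int d :: rat)"
  define R where "R = 1/(Q*(2*Q-1))"
  have tx: "t = x - of_int a0" unfolding t_def a0_def by simp
  have t01: "0 \<le> t" "t < 1" unfolding tx a0_def by linarith+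
  have "t \<noteq> 0" using assms(1) unfolding t_def .
  then have t0: "0 < t" using t01(1) by (simp add: less_le)
  have Q0: "Q > 0" using assms unfolding Q_def by simp
  have tD: "t = D / Q" unfolding tx D_def Q_def d_def assms(3) using assms(2)
    by (simp add: field_simps)
  have D0: "D > 0" using t0 Q0 tD by (simp add: zero_less_divide_iff)
  have DQ: "D < Q" using t01 Q0 tD by simp
  have d0: "0 < d" "d < q" using D0 DQ unfolding D_def Q_def by simp_all
  then have D1: "1 \<le> D" "D + 1 \<le> Q" unfolding D_def Q_def by simp_all
  have Q2: "2*Q-1 > 1" using D1 by simp
  have R0: "R > 0" unfolding R_def using Q0 Q2 by simp
  have "R < 1/Q" unfolding R_def
    by (rule frac_less_helper) (use Q0 Q2 in \<open>auto simp: algebra_simps\<close>)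
  moreover have "1/Q \<le> t" unfolding tD using D1 Q0 by (intro divide_right_mono) auto
  moreover have "t \<le> (Q-1)/Q" unfolding tD using D1 Q0 by (intro divide_right_mono) auto
  moreover have "(Q-1)/Q + 1/Q = 1" using Q0 by (simp add: field_simps)
  ultimately have tR: "0 < t - R" "t + R < 1" by linarith+
  have rx: "\<bar>r - x\<bar> < R" using assms(4) unfolding R_def Q_def .
  have r1: "of_int a0 < r" "r < of_int a0 + 1" using rx tR tx by auto
  then have fr: "\<lfloor>r\<rfloor> = a0" by (simp add: floor_eq_iff)
  have ur: "cf_rem r 0 = r - of_int a0" using fr by simp
  show ?thesis
  proof (rule that[of d])
    show "0 < d" "d < q" by (fact d0)+
    show "1 / cf_rem x 0 = of_int q / of_int d" using tD unfolding t_def D_def Q_def by simp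
    show "cf_rem r 0 \<noteq> 0" using ur r1 by simp
    show "\<lfloor>r\<rfloor> = \<lfloor>x\<rfloor>" using fr a0_def by simp
    show "\<bar>cf_rem r 0 - of_int d / of_int q\<bar> < 1/(of_int q * (2*of_int q - 1))"
      using ur tD tx rx unfolding R_def D_def Q_def by simp
  qed
qed

lemma cf_main:
  fixes p q :: int and x r :: rat
  shows "cf_len x = Suc L \<Longrightarrow> 0 < q \<Longrightarrow> x = of_int p / of_int q
    \<Longrightarrow> \<bar>r - x\<bar> < 1/(of_int q * (2*of_int q - 1)) \<Longrightarrow> cf_close x r"
proof (induction L arbitrary: x r p q)
  case 0
  have nz: "cf_rem x 0 \<noteq> 0" using 0 cf_len0[of x] by simp
  obtain d where d: "0 < d" "d < q" "1 / cf_rem x 0 = of_int q / of_int d"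
    "cf_rem r 0 \<noteq> 0" "\<lfloor>r\<rfloor> = \<lfloor>x\<rfloor>"
    "\<bar>cf_rem r 0 - of_int d / of_int q\<bar> < 1/(of_int q * (2*of_int q - 1))"
    using cf_step[OF nz 0(2-4)] by blast
  define x' where "x' = 1 / cf_rem x 0"
  have "cf_len x' = 0" using cf_len_Suc[OF nz] 0(1) unfolding x'_def by simp
  then have "cf_rem x' 0 = 0" using cf_len0 by blast
  then have xa: "x' = of_int \<lfloor>x'\<rfloor>" by simp
  define a1 where "a1 = \<lfloor>x'\<rfloor>"
  have "(of_int q :: rat) / of_int d = of_int a1" using xa d(3) unfolding x'_def a1_def by simp
  then have "(of_int q :: rat) = of_int a1 * of_int d" using d(1) by (simp add: field_simps)
  then have qa: "q = a1 * d" by (metis of_int_eq_iff of_int_mult)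
  have a2: "2 \<le> a1"
  proof (rule ccontr)
    assume "\<not> 2 \<le> a1"
    then have "a1 * d \<le> 1 * d" using d(1) by (intro mult_right_mono) auto
    then show False using qa d by simp
  qed
  have aq: "a1 \<le> q" using qa d(1) a2 by (simp add: mult_le_cancel_left1)
  have e: "(of_int d :: rat) / of_int q = 1 / of_int a1" using qa d(1) by simp
  have "of_int a1 - 1/2 < 1 / cf_rem r 0 \<and> 1 / cf_rem r 0 < of_int a1 + 1"
    by (rule ineq2) (use a2 aq d(6) e in auto)
  then have "cf_close (of_int a1) (1 / cf_rem r 0)" using cf_base a2 by blast
  then have "cf_close x' (1 / cf_rem r 0)" using xa unfolding a1_def by simp
  then show ?case using cf_close_shift nz d(4,5) unfolding x'_def by metis
next
  case (Suc L)
  have nz: "cf_rem x 0 \<noteq> 0" using Suc.prems(1) cf_len0[of x] by simp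
  obtain d where d: "0 < d" "d < q" "1 / cf_rem x 0 = of_int q / of_int d"
    "cf_rem r 0 \<noteq> 0" "\<lfloor>r\<rfloor> = \<lfloor>x\<rfloor>"
    "\<bar>cf_rem r 0 - of_int d / of_int q\<bar> < 1/(of_int q * (2*of_int q - 1))"
    using cf_step[OF nz Suc.prems(2-4)] by blast
  define x' where "x' = 1 / cf_rem x 0"
  have l: "cf_len x' = Suc L" using cf_len_Suc[OF nz] Suc.prems(1) unfolding x'_def by simp
  have "\<bar>1 / cf_rem r 0 - of_int q / of_int d\<bar> < 1/(of_int d * (2*of_int d - 1))"
    by (rule ineq1) (use d in auto)
  then have "cf_close x' (1 / cf_rem r 0)"
    using Suc.IH[OF l d(1), of q] d(3) unfolding x'_def by simp
  then show ?case using cf_close_shift nz d(4,5) unfolding x'_def by metis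
qed

theorem theorem5:
  fixes n1 n2 :: int and r0 :: rat
  assumes "n1 > 1" "n2 > 0" "n2 < n1" "coprime n1 n2"
    and "r0 \<ge> 0"
    and "\<bar>r0 - of_int n2 / of_int n1\<bar> < 1 / (4 * of_int n1 * (of_int n1 - 1))"
  shows "let as = cf_expansion (of_int n2 / of_int n1); bs = cf_expansion r0;
             L = length as - 1 in
         (L < length bs \<and> (\<forall>i\<le>L. as ! i = bs ! i))
       \<or> (L + 1 < length bs \<and> (\<forall>i<L. as ! i = bs ! i)
            \<and> as ! L - 1 = bs ! L \<and> bs ! (L + 1) = 1)"
proof -
  define x where "x = (of_int n2 / of_int n1 :: rat)"
  define N where "N = (of_int n1 :: rat)"
  have N2: "N \<ge> 2" using assms(1) unfolding N_def by simp
  have x01: "0 < x" "x < 1" unfolding x_def using assms(1-3) by simp_all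
  then have "\<lfloor>x\<rfloor> = 0" by (simp add: floor_eq_iff)
  then have "cf_rem x 0 \<noteq> 0" using x01 by simp
  then obtain L where L: "cf_len x = Suc L" using cf_len0[of x] not0_implies_Suc by blast
  have "N*(2*N-1) \<le> N*(4*N-4)" using N2 by (intro mult_left_mono) auto
  then have "1 / (4 * N * (N - 1)) \<le> 1/(N*(2*N-1))"
    by (intro frac_le_helper) (use N2 in \<open>auto simp: algebra_simps\<close>)
  then have "\<bar>r0 - x\<bar> < 1/(of_int n1*(2*of_int n1-1))"
    using assms(6) unfolding x_def N_def by linarith
  then have c: "cf_close x r0" using cf_main[OF L, of n1 n2] assms(1) unfolding x_def by simp
  show ?thesis
    using c unfolding Let_def cf_expansion_def x_def[symmetric] cf_close_def
    by (auto simp del: upt_Suc)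
qed

end
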